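(* Let $V\subset\mathbb{R}^d$ be a finite non-degenerate antichain and let $p\in S_V$ be a characteristic point. Then every minimum $v\in D_p$ is contained in some minimal generating set of $p$.
   Context: For $x,y\in\mathbb{R}^d$, $x\le y$ (dominance order) means $x_i\le y_i$ for all $i$; $y\rhd x$ means $y_i>x_i$ for all $i$; $y\rhd_i x$ means $y_i=x_i$ and $y_j>x_j$ for all $j\neq i$. The join is the componentwise maximum. $V\subset\mathbb{R}^d$ is a finite antichain in the dominance order (elements are called minima). The orthogonal surface $S_V$ is the topological boundary of $\langle V\rangle=\{x: x\ge v\text{ for some }v\in V\}$; equivalently $p\in S_V$ iff there is $v\in V$ with $v\le p$ and no $w\in V$ with $p\rhd w$. For $p\in S_V$, $D_p=\{v\in V:v\le p\}$. A generating set for $p\in S_V$ is a nonempty $G\subseteq D_p$ with $\bigvee G=p$; it is minimal if $\bigvee(G\setminus\{v\})\neq p$ for every $v\in G$. Flats: $U_i(v)=\{p\in S_V: p\rhd_i v\}$; for $v,w\in V$ put $v\sim_i w$ iff $U_i(v)\cap U_i(w)\neq\emptyset$, and let $\sim_i^c$ be the reflexive–transitive closure; the $i$-flat of $v$ is $F_i(v)=\overline{\bigcup_{w\sim_i^c v}U_i(w)}$, and an $i$-flat is any set of this form. A characteristic point is a point of $S_V$ that lies in some $i$-flat for every $i\in\{1,\dots,d\}$. $V$ is degenerate if there exist a characteristic point $p$, minima $x,u,v\in D_p$ and coordinates $i\neq j$ with $u_i<v_i=x_i=p_i$ and $v_j<u_j=x_j=p_j$; otherwise non-degenerate. *)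

theory Defs
  imports "HOL-Analysis.Analysis"
begin

definition dom_le :: "real ^ 'd \<Rightarrow> real ^ 'd \<Rightarrow> bool" where
  "dom_le x y \<longleftrightarrow> (\<forall>i. x $ i \<le> y $ i)"

definition dom_gt :: "real ^ 'd \<Rightarrow> real ^ 'd \<Rightarrow> bool" where
  "dom_gt y x \<longleftrightarrow> (\<forall>i. y $ i > x $ i)"

definition dom_gt_i :: "real ^ 'd \<Rightarrow> 'd \<Rightarrow> real ^ 'd \<Rightarrow> bool" where
  "dom_gt_i y i x \<longleftrightarrow> y $ i = x $ i \<and> (\<forall>j. j \<noteq> i \<longrightarrow> y $ j > x $ j)"

definition antichain :: "(real ^ 'd) set \<Rightarrow> bool" where
  "antichain V \<longleftrightarrow> (\<forall>v\<in>V. \<forall>w\<in>V. dom_le v w \<longrightarrow> v = w)"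

definition join :: "(real ^ 'd) set \<Rightarrow> real ^ 'd" where
  "join G = (\<chi> i. Max ((\<lambda>v. v $ i) ` G))"

definition orth_surface :: "(real ^ 'd) set \<Rightarrow> (real ^ 'd) set" where
  "orth_surface V = {p. (\<exists>v\<in>V. dom_le v p) \<and> \<not> (\<exists>w\<in>V. dom_gt p w)}"

definition Dset :: "(real ^ 'd) set \<Rightarrow> real ^ 'd \<Rightarrow> (real ^ 'd) set" where
  "Dset V p = {v\<in>V. dom_le v p}"

definition generating_set :: "(real ^ 'd) set \<Rightarrow> real ^ 'd \<Rightarrow> (real ^ 'd) set \<Rightarrow> bool" where
  "generating_set V p G \<longleftrightarrow> G \<noteq> {} \<and> G \<subseteq> Dset V p \<and> join G = p"

text \<open>Minimality: removing any element gives a set whose join is not p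
  (the join of the empty set is never p, by convention).\<close>
definition minimal_generating_set :: "(real ^ 'd) set \<Rightarrow> real ^ 'd \<Rightarrow> (real ^ 'd) set \<Rightarrow> bool" where
  "minimal_generating_set V p G \<longleftrightarrow> generating_set V p G \<and>
     (\<forall>v\<in>G. G - {v} \<noteq> {} \<longrightarrow> join (G - {v}) \<noteq> p)"

definition Uflat :: "(real ^ 'd) set \<Rightarrow> 'd \<Rightarrow> real ^ 'd \<Rightarrow> (real ^ 'd) set" where
  "Uflat V i v = {p \<in> orth_surface V. dom_gt_i p i v}"

definition sim_rel :: "(real ^ 'd) set \<Rightarrow> 'd \<Rightarrow> ((real ^ 'd) \<times> (real ^ 'd)) set" where
  "sim_rel V i = {(v, w). v \<in> V \<and> w \<in> V \<and> Uflat V i v \<inter> Uflat V i w \<noteq> {}}"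

definition Fflat :: "(real ^ 'd) set \<Rightarrow> 'd \<Rightarrow> real ^ 'd \<Rightarrow> (real ^ 'd) set" where
  "Fflat V i v = closure (\<Union>{Uflat V i w | w. (v, w) \<in> (sim_rel V i)\<^sup>*})"

definition is_flat :: "(real ^ 'd) set \<Rightarrow> 'd \<Rightarrow> (real ^ 'd) set \<Rightarrow> bool" where
  "is_flat V i F \<longleftrightarrow> (\<exists>v\<in>V. F = Fflat V i v)"

definition characteristic_point :: "(real ^ 'd) set \<Rightarrow> real ^ 'd \<Rightarrow> bool" where
  "characteristic_point V p \<longleftrightarrow> p \<in> orth_surface V \<and>
     (\<forall>i. \<exists>F. is_flat V i F \<and> p \<in> F)"

definition degenerate :: "(real ^ 'd) set \<Rightarrow> bool" where
  "degenerate V \<longleftrightarrow> (\<exists>p x u v i j. characteristic_point V p \<and>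
     x \<in> Dset V p \<and> u \<in> Dset V p \<and> v \<in> Dset V p \<and> i \<noteq> j \<and>
     u $ i < v $ i \<and> v $ i = x $ i \<and> x $ i = p $ i \<and>
     v $ j < u $ j \<and> u $ j = x $ j \<and> x $ j = p $ j)"

end

theory Submission
  imports Defs
begin

lemma join_cov:
  fixes G :: "(real ^ 'd) set"
  assumes "finite G" "G \<noteq> {}" "\<forall>g\<in>G. dom_le g p" "\<forall>k. \<exists>g\<in>G. g$k = p$k"
  shows "join G = p"
proof -
  have "join G $ k = p $ k" for k
  proof -
    obtain g where g: "g \<in> G" "g$k = p$k" using assms(4) by blast
    have "Max ((\<lambda>v. v $ k) ` G) = p $ k"
    proof (rule Max_eqI)
      show "finite ((\<lambda>v. v $ k) ` G)" using assms(1) by simp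
      show "y \<le> p$k" if "y \<in> (\<lambda>v. v $ k) ` G" for y
        using that assms(3) unfolding dom_le_def by auto
      show "p$k \<in> (\<lambda>v. v $ k) ` G" using g by (metis image_eqI)
    qed
    then show ?thesis by (simp add: join_def)
  qed
  then show ?thesis by (simp add: vec_eq_iff)
qed

lemma cov_join:
  fixes G :: "(real ^ 'd) set"
  assumes "finite G" "G \<noteq> {}" "join G = p"
  shows "\<exists>g\<in>G. g$k = p$k"
proof -
  have "Max ((\<lambda>v. v $ k) ` G) \<in> (\<lambda>v. v $ k) ` G"
    using assms by (intro Max_in) auto
  moreover have "Max ((\<lambda>v. v $ k) ` G) = p $ k"
    using assms(3) by (metis join_def vec_lambda_beta)
  ultimately show ?thesis by auto
qed

lemma gap_exists:
  fixes S :: "real set"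
  assumes "finite S"
  shows "\<exists>\<delta>>0. \<forall>a\<in>S. \<forall>b\<in>S. \<bar>a - b\<bar> < \<delta> \<longrightarrow> a = b"
proof -
  define \<Delta> where "\<Delta> = (\<lambda>(a,b). \<bar>a - b\<bar>) ` {(a,b). a\<in>S \<and> b\<in>S \<and> a \<noteq> b}"
  have fin: "finite \<Delta>" unfolding \<Delta>_def
    by (rule finite_imageI, rule finite_subset[of _ "S \<times> S"]) (use assms in auto)
  define \<delta> where "\<delta> = Min (insert 1 \<Delta>)"
  have pos: "\<delta> > 0" unfolding \<delta>_def using fin
    by (subst Min_gr_iff) (auto simp: \<Delta>_def)
  have "\<forall>a\<in>S. \<forall>b\<in>S. \<bar>a - b\<bar> < \<delta> \<longrightarrow> a = b"
  proof (intro ballI impI, rule ccontr)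
    fix a b assume ab: "a \<in> S" "b \<in> S" "\<bar>a - b\<bar> < \<delta>" "a \<noteq> b"
    then have "\<bar>a - b\<bar> \<in> \<Delta>" unfolding \<Delta>_def by force
    then have "\<delta> \<le> \<bar>a - b\<bar>" unfolding \<delta>_def using fin by simp
    then show False using ab by simp
  qed
  then show ?thesis using pos by blast
qed

lemma char_C:
  fixes V :: "(real ^ 'd) set" and p :: "real ^ 'd"
  assumes fV: "finite V" and cp: "characteristic_point V p"
  shows "\<exists>w\<in>Dset V p. w$i = p$i \<and>
           (\<forall>y\<in>Dset V p. y$i \<noteq> p$i \<longrightarrow> (\<exists>j. y$j = p$j \<and> w$j \<noteq> p$j))"
proof -
  obtain F where F: "is_flat V i F" "p \<in> F" using cp unfolding characteristic_point_def by blast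
  then obtain v0 where v0: "v0 \<in> V" "F = Fflat V i v0" unfolding is_flat_def by blast
  define X where "X = \<Union>{Uflat V i w | w. (v0, w) \<in> (sim_rel V i)\<^sup>*}"
  have pX: "p \<in> closure X" using F v0 unfolding Fflat_def X_def by simp
  define S where "S = (\<Union>x\<in>insert p V. range (\<lambda>k. x$k))"
  have "finite S" unfolding S_def using fV by auto
  then obtain \<delta> :: real where d: "\<delta> > 0" "\<forall>a\<in>S. \<forall>b\<in>S. \<bar>a - b\<bar> < \<delta> \<longrightarrow> a = b"
    using gap_exists by blast
  obtain q where q: "q \<in> X" "dist q p < \<delta>" using pX d(1) closure_approachable by metis
  have qc: "\<bar>q$k - p$k\<bar> < \<delta>" for k
    using dist_vec_nth_le[of q k p] q(2) by (simp add: dist_real_def)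
  obtain w where w: "q \<in> Uflat V i w" "(v0, w) \<in> (sim_rel V i)\<^sup>*" using q(1) unfolding X_def by blast
  have wV: "w \<in> V" using w(2) v0(1)
    by (cases rule: rtranclE) (auto simp: sim_rel_def)
  have qS: "q \<in> orth_surface V" and qi: "q$i = w$i" and qj: "\<And>j. j \<noteq> i \<Longrightarrow> q$j > w$j"
    using w(1) unfolding Uflat_def dom_gt_i_def by auto
  have Sw: "w$k \<in> S" for k using wV unfolding S_def by auto
  have Sp: "p$k \<in> S" for k unfolding S_def by auto
  have wi: "w$i = p$i" using d(2) Sw Sp qc[of i] qi by metis
  have wle: "w$k \<le> p$k" for k
  proof (cases "k = i")
    case True then show ?thesis using wi by simp
  next
    case False
    show ?thesis
    proof (rule ccontr)
      assume "\<not> w$k \<le> p$k"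
      then have "\<bar>w$k - p$k\<bar> < \<delta>" using qj[OF False] qc[of k] by auto
      then have "w$k = p$k" using d(2) Sw Sp by blast
      then show False using \<open>\<not> w$k \<le> p$k\<close> by simp
    qed
  qed
  have wD: "w \<in> Dset V p" using wV wle unfolding Dset_def dom_le_def by auto
  have "\<exists>j. y$j = p$j \<and> w$j \<noteq> p$j" if y: "y \<in> Dset V p" "y$i \<noteq> p$i" for y
  proof -
    have yV: "y \<in> V" and yle: "\<And>k. y$k \<le> p$k" using y unfolding Dset_def dom_le_def by auto
    have "\<not> dom_gt q y" using qS yV unfolding orth_surface_def by blast
    then obtain j where j: "q$j \<le> y$j" unfolding dom_gt_def by (auto simp: not_less)
    have "y$i < p$i" using yle[of i] y(2) by simp
    then have ji: "j \<noteq> i" using j qi wi by auto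
    have Sy: "y$j \<in> S" using yV unfolding S_def by auto
    have "\<bar>y$j - p$j\<bar> < \<delta>" using j yle[of j] qc[of j] by auto
    then have yj: "y$j = p$j" using d(2) Sy Sp by blast
    have "w$j < p$j" using qj[OF ji] j yj by simp
    then show ?thesis using yj by auto
  qed
  then show ?thesis using wD wi by blast
qed

theorem corollary4p9:
  fixes V :: "(real ^ 'd) set" and p v :: "real ^ 'd"
  assumes "finite V" and "antichain V" and "\<not> degenerate V"
    and "characteristic_point V p"
    and "v \<in> Dset V p"
  shows "\<exists>G. minimal_generating_set V p G \<and> v \<in> G"
proof -
  define D where "D = Dset V p"
  have fD: "finite D" using assms(1) unfolding D_def Dset_def by auto
  have Dle: "\<And>x k. x \<in> D \<Longrightarrow> x$k \<le> p$k" unfolding D_def Dset_def dom_le_def by auto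
  define A where "A = (\<lambda>k. {w\<in>D. w$k = p$k})"
  have vD: "v \<in> D" using assms(5) D_def by simp
  have vV: "v \<in> V" using assms(5) unfolding Dset_def by auto
  have "\<not> dom_gt p v" using assms(4) vV unfolding characteristic_point_def orth_surface_def by blast
  then obtain k0 where "p$k0 \<le> v$k0" unfolding dom_gt_def by (auto simp: not_less)
  then have k0: "v$k0 = p$k0" using Dle[OF vD, of k0] by simp
  obtain i where i: "v$i = p$i" and imin: "\<And>k. v$k = p$k \<Longrightarrow> card (A i) \<le> card (A k)"
    using ex_has_least_nat[of "\<lambda>k. v$k = p$k" k0 "\<lambda>k. card (A k)"] k0 by blast
  have cov: "\<exists>c\<in>D. c$j = p$j \<and> c$i \<noteq> p$i" if j: "v$j \<noteq> p$j" for j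
  proof -
    obtain w where w: "w \<in> D" "w$j = p$j"
      and wC: "\<forall>y\<in>D. y$j \<noteq> p$j \<longrightarrow> (\<exists>k. y$k = p$k \<and> w$k \<noteq> p$k)"
      using char_C[OF assms(1) assms(4), of j] unfolding D_def by blast
    show ?thesis
    proof (cases "w$i = p$i")
      case False then show ?thesis using w by blast
    next
      case True
      obtain k where k: "v$k = p$k" "w$k \<noteq> p$k" using wC vD j by blast
      have ik: "i \<noteq> k" using k True by auto
      have sub: "A k \<subseteq> A i"
      proof
        fix u assume u: "u \<in> A k"
        show "u \<in> A i"
        proof (rule ccontr)
          assume "u \<notin> A i"
          then have "u$i < p$i" using u Dle unfolding A_def by (auto simp: less_le)
          moreover have "w$k < p$k" using k(2) Dle[OF w(1), of k] by simp
          ultimately have "degenerate V"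
            unfolding degenerate_def
            apply (rule_tac x=p in exI, rule_tac x=v in exI, rule_tac x=u in exI, rule_tac x=w in exI,
                   rule_tac x=i in exI, rule_tac x=k in exI)
            using assms(4) vD w u True k i ik unfolding A_def D_def by auto
          then show False using assms(3) by simp
        qed
      qed
      have "w \<in> A i - A k" using w True k unfolding A_def by auto
      then have "A k \<subset> A i" using sub by blast
      then have "card (A k) < card (A i)" using fD unfolding A_def by (intro psubset_card_mono) auto
      then show ?thesis using imin[OF k(1)] by simp
    qed
  qed
  define c where "c = (\<lambda>j. SOME c. c\<in>D \<and> c$j = p$j \<and> c$i \<noteq> p$i)"
  have c: "c j \<in> D \<and> c j $ j = p$j \<and> c j $ i \<noteq> p$i" if "v$j \<noteq> p$j" for j
  proof -
    have "\<exists>c. c\<in>D \<and> c$j = p$j \<and> c$i \<noteq> p$i" using cov[OF that] by blast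
    then show ?thesis unfolding c_def by (rule someI_ex)
  qed
  define G0 where "G0 = insert v (c ` {j. v$j \<noteq> p$j})"
  have G0D: "G0 \<subseteq> D" using vD c unfolding G0_def by auto
  have G0i: "\<And>g. g \<in> G0 \<Longrightarrow> g \<noteq> v \<Longrightarrow> g$i \<noteq> p$i" using c unfolding G0_def by auto
  define cv where "cv = (\<lambda>G. \<forall>k. \<exists>g\<in>G. g$k = p$k)"
  have cvG0: "cv G0" unfolding cv_def
  proof
    fix k show "\<exists>g\<in>G0. g$k = p$k"
    proof (cases "v$k = p$k")
      case True then show ?thesis unfolding G0_def by blast
    next
      case False
      then have "c k \<in> G0" unfolding G0_def by blast
      then show ?thesis using c[OF False] by blast
    qed
  qed
  define P where "P = (\<lambda>G. G \<subseteq> G0 \<and> v \<in> G \<and> cv G)"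
  have "P G0" unfolding P_def G0_def using cvG0 G0_def by auto
  then obtain G where G: "P G" and Gmin: "\<And>H. P H \<Longrightarrow> card G \<le> card H"
    using ex_has_least_nat[of P G0 card] by blast
  have GD: "G \<subseteq> D" using G G0D unfolding P_def by auto
  have fG: "finite G" using GD fD finite_subset by blast
  have vG: "v \<in> G" using G unfolding P_def by auto
  have joinG: "join G = p"
    using join_cov[OF fG _ _, of p] vG GD G Dle unfolding P_def cv_def dom_le_def by blast
  have "minimal_generating_set V p G"
    unfolding minimal_generating_set_def generating_set_def
  proof (intro conjI ballI impI)
    show "G \<noteq> {}" using vG by auto
    show "G \<subseteq> Dset V p" using GD D_def by simp
    show "join G = p" by (rule joinG)
  next
    fix w assume w: "w \<in> G" "G - {w} \<noteq> {}"
    show "join (G - {w}) \<noteq> p"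
    proof
      assume jw: "join (G - {w}) = p"
      have cvw: "cv (G - {w})" unfolding cv_def
        using cov_join[OF _ w(2) jw] fG by blast
      show False
      proof (cases "w = v")
        case True
        obtain g where "g \<in> G - {w}" "g$i = p$i" using cvw unfolding cv_def by blast
        then show False using G0i G True unfolding P_def by auto
      next
        case False
        then have "P (G - {w})" using G cvw unfolding P_def by auto
        then have "card G \<le> card (G - {w})" by (rule Gmin)
        moreover have "card (G - {w}) < card G" using fG w(1) by (metis card_Diff1_less)
        ultimately show False by simp
      qed
    qed
  qed
  then show ?thesis using vG by blast
qed

end
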